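(* Let $m$ be a positive integer and $n=m(m+1)/2$, and write $\prod_{i=1}^m(1-X^i)=\sum_{i=0}^n c_iX^i$. The matrix $\mathsf R$ with rows indexed by positive integers $k$, columns indexed by non-empty subsets $S\subseteq[1,m]$, and $(k,S)$ entry $r(k,S)$, has rank $n$ over $\mathbb{Q}$. Moreover, for all $k>n$ and all non-empty $S\subseteq[1,m]$, $$r(k,S)=-\sum_{j=k-n}^{k-1}c_{k-j}\,r(j,S).$$
   Context: $r(k,S)$ is the number of partitions $\lambda$ of $k$ such that every part of $\lambda$ lies in $S$ and every element of $S$ occurs as a part of $\lambda$ (i.e. the set of distinct parts of $\lambda$ is exactly $S$). $[1,m]=\{1,\dots,m\}$. *)

theory Defs
  imports Main "HOL-Library.Multiset" "HOL-Computational_Algebra.Polynomial"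
begin

definition r :: "nat \<Rightarrow> nat set \<Rightarrow> nat" where
  "r k S = card {p :: nat multiset. 0 \<notin># p \<and> sum_mset p = k \<and> set_mset p = S}"

definition c :: "nat \<Rightarrow> nat \<Rightarrow> int" where
  "c m i = coeff (\<Prod>j\<in>{1..m}. (1 - monom 1 j) :: int poly) i"

definition indep_rows :: "'r set \<Rightarrow> 'c set \<Rightarrow> ('r \<Rightarrow> 'c \<Rightarrow> rat) \<Rightarrow> bool" where
  "indep_rows K C M \<longleftrightarrow> finite K \<and>
     (\<forall>a :: 'r \<Rightarrow> rat. (\<forall>s\<in>C. (\<Sum>k\<in>K. a k * M k s) = 0) \<longrightarrow> (\<forall>k\<in>K. a k = 0))"

definition matrix_rank :: "'r set \<Rightarrow> 'c set \<Rightarrow> ('r \<Rightarrow> 'c \<Rightarrow> rat) \<Rightarrow> nat" where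
  "matrix_rank Rw C M = Sup (card ` {K. K \<subseteq> Rw \<and> indep_rows K C M})"

end

theory Submission
  imports Defs "HOL-Computational_Algebra.Polynomial_FPS"
begin

definition parts :: "nat \<Rightarrow> nat set \<Rightarrow> nat multiset set" where
  "parts k S = {p. 0 \<notin># p \<and> sum_mset p = k \<and> set_mset p = S}"

lemma r_parts: "r k S = card (parts k S)" by (simp add: r_def parts_def)

lemma size_le_sum: "0 \<notin># p \<Longrightarrow> size p \<le> sum_mset (p::nat multiset)"
proof (induction p)
  case empty then show ?case by simp
next
  case (add x p) then show ?case by (cases x) auto
qed

lemma mem_le_sum: "x \<in># p \<Longrightarrow> x \<le> sum_mset (p::nat multiset)"
  by (metis le_add1 multi_member_split sum_mset.add_mset)

lemma finite_parts: "finite (parts k S)"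
proof -
  have "parts k S \<subseteq> mset ` {xs. set xs \<subseteq> {0..k} \<and> length xs \<le> k}"
  proof
    fix p assume p: "p \<in> parts k S"
    have "p = mset (sorted_list_of_multiset p)" by simp
    moreover have "set (sorted_list_of_multiset p) \<subseteq> {0..k}"
      using p by (auto simp: parts_def dest!: mem_le_sum)
    moreover have "length (sorted_list_of_multiset p) \<le> k"
      using p size_le_sum[of p] by (auto simp: parts_def simp flip: size_mset)
    ultimately show "p \<in> mset ` {xs. set xs \<subseteq> {0..k} \<and> length xs \<le> k}" by blast
  qed
  then show ?thesis using finite_lists_length_le[of "{0..k}" k] finite_subset by blast
qed

lemma r_empty: "r k {} = (if k = 0 then 1 else 0)"
proof -
  have "parts k {} = (if k = 0 then {{#}} else {})" by (auto simp: parts_def)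
  then show ?thesis by (simp add: r_parts)
qed

lemma parts_insert_small:
  assumes "k < s" shows "parts k (insert s F) = {}"
proof -
  { fix p assume "p \<in> parts k (insert s F)"
    then have "s \<in># p" "sum_mset p = k" by (auto simp: parts_def)
    then have False using mem_le_sum[of s p] assms by simp }
  then show ?thesis by blast
qed

lemma parts_insert_big:
  assumes "s \<notin> F" "0 < s" "s \<le> k"
  shows "parts k (insert s F) = add_mset s ` parts (k - s) (insert s F) \<union> add_mset s ` parts (k - s) F"
proof
  show "parts k (insert s F) \<subseteq> add_mset s ` parts (k - s) (insert s F) \<union> add_mset s ` parts (k - s) F"
  proof
    fix p assume p: "p \<in> parts k (insert s F)"
    then have P: "0 \<notin># p \<and> sum_mset p = k \<and> set_mset p = insert s F" unfolding parts_def mem_Collect_eq .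
    then have p0: "0 \<notin># p" and ps: "sum_mset p = k" and pset: "set_mset p = insert s F" by blast+
    have sp: "s \<in># p" using pset by simp
    define q where "q = p - {#s#}"
    have pq: "p = add_mset s q" using sp by (simp add: q_def)
    have q0: "0 \<notin># q" using p0 pq by simp
    have qs: "sum_mset q = k - s" using ps pq by simp
    have qset: "insert s (set_mset q) = insert s F" using pset pq by simp
    show "p \<in> add_mset s ` parts (k - s) (insert s F) \<union> add_mset s ` parts (k - s) F"
    proof (cases "s \<in># q")
      case True
      then have "set_mset q = insert s F" using qset by (simp add: insert_absorb)
      then have "q \<in> parts (k - s) (insert s F)" using q0 qs by (simp add: parts_def)
      then show ?thesis using pq by blast
    next
      case False
      then have "set_mset q = F" using qset assms(1)
        by (metis insert_ident)
      then have "q \<in> parts (k - s) F" using q0 qs by (simp add: parts_def)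
      then show ?thesis using pq by blast
    qed
  qed
next
  show "add_mset s ` parts (k - s) (insert s F) \<union> add_mset s ` parts (k - s) F \<subseteq> parts k (insert s F)"
  proof
    fix p assume "p \<in> add_mset s ` parts (k - s) (insert s F) \<union> add_mset s ` parts (k - s) F"
    then obtain q where pq: "p = add_mset s q" and q: "q \<in> parts (k - s) (insert s F) \<or> q \<in> parts (k - s) F"
      by blast
    have "0 \<notin># q" "sum_mset q = k - s" "set_mset q = insert s F \<or> set_mset q = F"
      using q by (auto simp: parts_def)
    then show "p \<in> parts k (insert s F)"
    proof (elim conjE disjE)
      assume "0 \<notin># q" "sum_mset q = k - s" "set_mset q = insert s F"
      then show ?thesis using pq assms(2,3) unfolding parts_def mem_Collect_eq
        by (simp add: insert_absorb)
    next
      assume "0 \<notin># q" "sum_mset q = k - s" "set_mset q = F"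
      then show ?thesis using pq assms(2,3) unfolding parts_def mem_Collect_eq
        by simp
    qed
  qed
qed

lemma r_insert:
  assumes "s \<notin> F" "0 < s"
  shows "r k (insert s F) = (if k < s then 0 else r (k - s) (insert s F) + r (k - s) F)"
proof (cases "k < s")
  case True then show ?thesis by (simp add: r_parts parts_insert_small)
next
  case False
  have disj: "add_mset s ` parts (k - s) (insert s F) \<inter> add_mset s ` parts (k - s) F = {}"
  proof -
    { fix q1 q2 assume q: "q1 \<in> parts (k-s) (insert s F)" "q2 \<in> parts (k-s) F" "add_mset s q1 = add_mset s q2"
      then have "set_mset q1 = insert s F" "set_mset q2 = F" "q1 = q2"
        unfolding parts_def mem_Collect_eq by simp_all
      then have False using assms(1) by auto }
    then show ?thesis by blast
  qed
  show ?thesis using False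
    apply (simp add: r_parts parts_insert_big[OF assms] finite_parts card_Un_disjoint[OF _ _ disj])
    apply (simp add: card_image inj_on_def)
    done
qed


definition Rf :: "nat set \<Rightarrow> 'a::comm_ring_1 fps" where
  "Rf S = Abs_fps (\<lambda>k. of_nat (r k S))"

lemma Rf_empty: "Rf {} = 1"
  by (rule fps_ext) (simp add: Rf_def r_empty)

lemma Rf_insert:
  assumes "s \<notin> F" "0 < s"
  shows "Rf (insert s F) * (1 - fps_X^s) = (fps_X^s * Rf F :: 'a::comm_ring_1 fps)"
proof (rule fps_ext)
  fix k
  have "fps_nth (Rf (insert s F) * (1 - fps_X^s) :: 'a fps) k = fps_nth (Rf (insert s F)) k - fps_nth (Rf (insert s F) * fps_X^s) k"
    by (simp add: right_diff_distrib)
  also have "\<dots> = fps_nth (fps_X^s * Rf F :: 'a fps) k"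
    unfolding fps_X_power_mult_right_nth fps_X_power_mult_nth
    using r_insert[OF assms, of k] by (simp add: Rf_def)
  finally show "fps_nth (Rf (insert s F) * (1 - fps_X^s) :: 'a fps) k = fps_nth (fps_X^s * Rf F :: 'a fps) k" .
qed

lemma Rf_prod:
  assumes "finite T" "S \<subseteq> T" "0 \<notin> T"
  shows "Rf S * (\<Prod>i\<in>T. 1 - fps_X^i) = (\<Prod>s\<in>S. fps_X^s) * (\<Prod>i\<in>T-S. 1 - fps_X^i :: 'a::comm_ring_1 fps)"
proof -
  have "finite S" using assms finite_subset by blast
  then show ?thesis using assms
  proof (induction S arbitrary: T rule: finite_induct)
    case empty then show ?case by (simp add: Rf_empty)
  next
    case (insert s F T)
    have sT: "s \<in> T" "0 < s" using insert.prems by (auto intro!: gr0I)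
    have IH: "Rf F * (\<Prod>i\<in>T-{s}. 1 - fps_X^i) = (\<Prod>s\<in>F. fps_X^s) * (\<Prod>i\<in>T-{s}-F. 1 - fps_X^i :: 'a fps)"
      using insert by auto
    have "(\<Prod>i\<in>T. 1 - fps_X^i :: 'a fps) = (1 - fps_X^s) * (\<Prod>i\<in>T-{s}. 1 - fps_X^i)"
      using insert(4) sT by (simp add: prod.remove)
    then have "Rf (insert s F) * (\<Prod>i\<in>T. 1 - fps_X^i :: 'a fps)
        = (Rf (insert s F) * (1 - fps_X^s)) * (\<Prod>i\<in>T-{s}. 1 - fps_X^i)" by (simp add: mult.assoc)
    also have "\<dots> = fps_X^s * (Rf F * (\<Prod>i\<in>T-{s}. 1 - fps_X^i))"
      by (simp add: Rf_insert[OF insert(2) sT(2)] mult.assoc[symmetric])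
    also have "\<dots> = (\<Prod>s\<in>insert s F. fps_X^s) * (\<Prod>i\<in>T - insert s F. 1 - fps_X^i)"
      using IH insert(1,2) by (simp add: mult.assoc Diff_insert2[symmetric] insert_commute)
    finally show ?case .
  qed
qed


definition Pp :: "nat \<Rightarrow> nat set \<Rightarrow> 'a::comm_ring_1 poly" where
  "Pp m S = (\<Prod>s\<in>S. monom 1 s) * (\<Prod>i\<in>{1..m}-S. 1 - monom 1 i)"

lemma fps_Pp: "fps_of_poly (Pp m S) = (\<Prod>s\<in>S. fps_X^s) * (\<Prod>i\<in>{1..m}-S. 1 - fps_X^i)"
  by (simp add: Pp_def fps_of_poly_mult fps_of_poly_prod fps_of_poly_diff fps_of_poly_monom')

lemma sum_Icc_m: "\<Sum>{1..m} = m * (m + 1) div (2::nat)"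
  by (simp add: Sum_Icc_nat)

lemma degree_Pp:
  assumes "S \<subseteq> {1..m}"
  shows "degree (Pp m S :: 'a::comm_ring_1 poly) \<le> m * (m + 1) div 2"
proof -
  have fS: "finite S" using assms finite_subset by blast
  have d1: "degree (\<Prod>s\<in>S. monom 1 s :: 'a poly) \<le> \<Sum>S"
    using degree_prod_sum_le[OF fS, of "\<lambda>s. monom 1 s :: 'a poly"]
    by (simp add: o_def) (meson degree_monom_le order_trans sum_mono)
  have d2: "degree (\<Prod>i\<in>{1..m}-S. 1 - monom 1 i :: 'a poly) \<le> \<Sum>({1..m}-S)"
  proof -
    have "degree (\<Prod>i\<in>{1..m}-S. 1 - monom 1 i :: 'a poly) \<le> (\<Sum>i\<in>{1..m}-S. degree (1 - monom 1 i :: 'a poly))"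
      using degree_prod_sum_le[of "{1..m}-S" "\<lambda>i. 1 - monom 1 i :: 'a poly"] by (simp add: o_def)
    also have "\<dots> \<le> \<Sum>({1..m}-S)"
    proof (rule sum_mono)
      fix i show "degree (1 - monom 1 i :: 'a poly) \<le> i"
        by (rule degree_diff_le) (auto simp: degree_monom_le)
    qed
    finally show ?thesis .
  qed
  have "degree (Pp m S :: 'a poly) \<le> \<Sum>S + \<Sum>({1..m}-S)"
    unfolding Pp_def using degree_mult_le d1 d2 by (meson add_mono order_trans)
  also have "\<Sum>S + \<Sum>({1..m}-S) = \<Sum>{1..m}"
    using sum.subset_diff[OF assms, of id] by simp
  also have "\<Sum>{1..m} = m * (m + 1) div 2" by (rule sum_Icc_m)
  finally show ?thesis .
qed

lemma Pp_empty: "Pp m {} = (\<Prod>j\<in>{1..m}. (1 - monom 1 j))"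
  by (simp add: Pp_def)

lemma c_eq: "c m i = coeff (Pp m {} :: int poly) i"
  by (simp add: c_def Pp_empty)

lemma c_big: "i > m * (m + 1) div 2 \<Longrightarrow> c m i = 0"
  unfolding c_eq using degree_Pp[of "{}" m, where 'a=int] by (intro coeff_eq_0) auto

lemma coeff0_Pp: "coeff (Pp m {} :: 'a::comm_ring_1 poly) 0 = 1"
proof -
  have "coeff (Pp m {} :: 'a poly) 0 = poly (Pp m {}) 0" by (simp add: poly_0_coeff_0)
  also have "\<dots> = (\<Prod>j\<in>{1..m}. 1 - 0^j :: 'a)" by (simp add: Pp_def poly_prod poly_monom)
  also have "\<dots> = 1" by (rule prod.neutral) (auto simp: power_0_left)
  finally show ?thesis .
qed

lemma c_0: "c m 0 = 1"
  by (simp add: c_eq coeff0_Pp)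

lemma Rf_Pp:
  assumes "S \<subseteq> {1..m}"
  shows "Rf S * fps_of_poly (Pp m {}) = fps_of_poly (Pp m S :: 'a::comm_ring_1 poly)"
  unfolding fps_Pp using Rf_prod[of "{1..m}" S] assms by simp

lemma recurrence:
  assumes "S \<subseteq> {1..m}" "k > m * (m + 1) div 2"
  shows "int (r k S) = - (\<Sum>j = k - m * (m + 1) div 2 .. k - 1. c m (k - j) * int (r j S))"
proof -
  define n where "n = m * (m + 1) div 2"
  define f where "f i = int (r i S) * c m (k - i)" for i
  have "fps_nth (Rf S * fps_of_poly (Pp m {}) :: int fps) k = coeff (Pp m S :: int poly) k"
    using Rf_Pp[OF assms(1), where 'a=int] by simp
  also have "\<dots> = 0" using degree_Pp[OF assms(1), where 'a=int] assms(2) by (intro coeff_eq_0) auto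
  finally have "(\<Sum>i=0..k. f i) = 0"
    by (simp add: fps_mult_nth Rf_def f_def c_eq)
  moreover have "(\<Sum>i=0..k. f i) = (\<Sum>i=k-n..k. f i)"
    by (rule sum.mono_neutral_right) (auto simp: f_def n_def intro!: c_big)
  moreover have "{k-n..k} = insert k {k-n..k-1}" using assms(2) unfolding n_def by auto
  moreover have "f k = int (r k S)" by (simp add: f_def c_0)
  moreover have "sum f (insert k {k-n..k-1}) = f k + sum f {k-n..k-1}"
    by (rule sum.insert) (use assms(2) in auto)
  ultimately have "int (r k S) + (\<Sum>i=k-n..k-1. f i) = 0" by simp
  then show ?thesis by (simp add: f_def n_def mult.commute eq_neg_iff_add_eq_0)
qed


lemma subset_sums:
  fixes t m :: nat
  shows "1 \<le> t \<Longrightarrow> t \<le> m * (m + 1) div 2 \<Longrightarrow> \<exists>U. U \<subseteq> {1..m} \<and> U \<noteq> {} \<and> \<Sum>U = t"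
proof (induction m arbitrary: t)
  case 0 then show ?case by simp
next
  case (Suc m)
  show ?case
  proof (cases "t \<le> Suc m")
    case True then show ?thesis using Suc.prems by (intro exI[of _ "{t}"]) auto
  next
    case False
    have e: "Suc m * (Suc m + 1) div 2 = m * (m + 1) div 2 + Suc m"
      by (induction m) auto
    have t1: "1 \<le> t - Suc m" using False by simp
    have t2: "t - Suc m \<le> m * (m + 1) div 2" using Suc.prems(2) e by simp
    obtain U where U: "U \<subseteq> {1..m}" "U \<noteq> {}" "\<Sum>U = t - Suc m"
      using Suc.IH[OF t1 t2] by blast
    have "Suc m \<notin> U" using U by auto
    moreover have "finite U" using U finite_subset by blast
    ultimately show ?thesis using U False
      by (intro exI[of _ "insert (Suc m) U"]) auto
  qed
qed

definition Lf :: "(nat \<Rightarrow> rat) \<Rightarrow> nat \<Rightarrow> rat fps \<Rightarrow> rat fps \<Rightarrow> rat" where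
  "Lf a n E Q = (\<Sum>k\<in>{1..n}. a k * fps_nth (Q * E) k)"

lemma Lf_sum: "Lf a n E (sum g A) = (\<Sum>B\<in>A. Lf a n E (g B))"
  unfolding Lf_def
  by (simp add: sum_distrib_right fps_sum_nth sum_distrib_left sum.swap[of _ A])

lemma X_expand:
  assumes "U \<subseteq> {1..m}"
  shows "(fps_X ^ (\<Sum>U) :: rat fps) = (\<Sum>B\<in>Pow ({1..m}-U). fps_of_poly (Pp m (U \<union> B)))"
proof -
  define W where "W = {1..m} - U"
  have fU: "finite U" using assms finite_subset by blast
  have fW: "finite W" by (simp add: W_def)
  have "(fps_X ^ (\<Sum>U) :: rat fps) = (\<Prod>i\<in>U. fps_X^i) * (\<Prod>i\<in>W. fps_X^i + (1 - fps_X^i))"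
    by (simp add: power_sum)
  also have "\<dots> = (\<Prod>i\<in>U. fps_X^i) * (\<Sum>B\<in>Pow W. (\<Prod>i\<in>B. fps_X^i) * (\<Prod>i\<in>W-B. 1 - fps_X^i))"
    by (subst prod_add[OF fW]) (rule refl)
  also have "\<dots> = (\<Sum>B\<in>Pow W. (\<Prod>i\<in>U. fps_X^i) * (\<Prod>i\<in>B. fps_X^i) * (\<Prod>i\<in>W-B. 1 - fps_X^i))"
    by (simp add: sum_distrib_left mult.assoc)
  also have "\<dots> = (\<Sum>B\<in>Pow W. fps_of_poly (Pp m (U \<union> B)))"
  proof (rule sum.cong[OF refl])
    fix B assume B: "B \<in> Pow W"
    have fB: "finite B" using B fW finite_subset by auto
    have dj: "U \<inter> B = {}" using B by (auto simp: W_def)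
    have e1: "(\<Prod>i\<in>U. fps_X^i) * (\<Prod>i\<in>B. fps_X^i) = (\<Prod>i\<in>U \<union> B. fps_X^i :: rat fps)"
      by (simp add: prod.union_disjoint[OF fU fB dj])
    have e2: "W - B = {1..m} - (U \<union> B)" by (auto simp: W_def)
    show "(\<Prod>i\<in>U. fps_X^i) * (\<Prod>i\<in>B. fps_X^i) * (\<Prod>i\<in>W-B. 1 - fps_X^i) = (fps_of_poly (Pp m (U \<union> B)) :: rat fps)"
      by (simp add: fps_Pp e2 flip: e1)
  qed
  finally show ?thesis by (simp add: W_def)
qed

lemma rows_indep:
  assumes hyp: "\<forall>S. S \<subseteq> {1..m} \<and> S \<noteq> {} \<longrightarrow> (\<Sum>k\<in>{1..m * (m + 1) div 2}. a k * of_nat (r k S)) = (0::rat)"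
  shows "\<forall>k\<in>{1..m * (m + 1) div 2}. a k = 0"
proof (rule ccontr)
  define n where "n = m * (m + 1) div 2"
  define Dq where "Dq = (fps_of_poly (Pp m {}) :: rat fps)"
  define E where "E = inverse Dq"
  have D0: "fps_nth Dq 0 = 1" by (simp add: Dq_def coeff0_Pp)
  have E0: "fps_nth E 0 = 1" by (simp add: E_def D0)
  have DE: "Dq * E = 1" unfolding E_def by (rule inverse_mult_eq_1') (simp add: D0)
  have LQ: "Lf a n E (fps_of_poly (Pp m S)) = 0" if "S \<subseteq> {1..m}" "S \<noteq> {}" for S
  proof -
    have "fps_of_poly (Pp m S) * E = Rf S * Dq * E" using Rf_Pp[OF that(1), where 'a=rat] by (simp add: Dq_def)
    also have "\<dots> = Rf S" by (simp add: mult.assoc DE)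
    finally show ?thesis using hyp that by (simp add: Lf_def Rf_def n_def)
  qed
  have LX: "Lf a n E (fps_X ^ t) = 0" if "t \<in> {1..n}" for t
  proof -
    have t1: "1 \<le> t" "t \<le> m * (m + 1) div 2" using that by (auto simp: n_def)
    obtain U where U: "U \<subseteq> {1..m}" "U \<noteq> {}" "\<Sum>U = t" using subset_sums[OF t1] by blast
    have "Lf a n E (fps_X ^ t) = (\<Sum>B\<in>Pow ({1..m}-U). Lf a n E (fps_of_poly (Pp m (U \<union> B))))"
      using X_expand[OF U(1)] U(3) by (simp add: Lf_sum)
    also have "\<dots> = 0" using U by (intro sum.neutral) (auto intro!: LQ)
    finally show ?thesis .
  qed
  assume "\<not> (\<forall>k\<in>{1..m * (m + 1) div 2}. a k = 0)"
  then have ne: "{k\<in>{1..n}. a k \<noteq> 0} \<noteq> {}" by (auto simp: n_def)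
  define t where "t = Max {k\<in>{1..n}. a k \<noteq> 0}"
  have t: "t \<in> {1..n}" "a t \<noteq> 0" using Max_in[OF _ ne] by (auto simp: t_def)
  have fin: "finite {k\<in>{1..n}. a k \<noteq> 0}" by simp
  have tmax: "a k = 0" if "k \<in> {1..n}" "k > t" for k
  proof (rule ccontr)
    assume "a k \<noteq> 0"
    then have "k \<le> t" using Max_ge[OF fin, of k] that unfolding t_def by blast
    then show False using that by simp
  qed
  have "Lf a n E (fps_X ^ t) = (\<Sum>k\<in>{1..n}. a k * (if k < t then 0 else fps_nth E (k - t)))"
    by (simp add: Lf_def fps_X_power_mult_nth)
  also have "\<dots> = (\<Sum>k\<in>{t}. a k * (if k < t then 0 else fps_nth E (k - t)))"
    by (rule sum.mono_neutral_right) (use t tmax in auto)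
  also have "\<dots> = a t" by (simp add: E0)
  finally show False using LX[OF t(1)] t(2) by simp
qed


lemma elim:
  assumes "finite J" "finite K" "card J < card K"
  shows "\<exists>a. (\<exists>k\<in>K. a k \<noteq> 0) \<and> (\<forall>j\<in>J. (\<Sum>k\<in>K. a k * b k j) = (0::'a::field))"
  using assms
proof (induction J arbitrary: K b rule: finite_induct)
  case empty
  then obtain k0 where "k0 \<in> K" by fastforce
  then show ?case by (intro exI[of _ "\<lambda>k. if k = k0 then 1 else 0"]) auto
next
  case (insert j J K b)
  show ?case
  proof (cases "\<forall>k\<in>K. b k j = 0")
    case True
    obtain a where a: "\<exists>k\<in>K. a k \<noteq> 0" "\<forall>i\<in>J. (\<Sum>k\<in>K. a k * b k i) = 0"
      using insert.IH[of K b] insert.prems insert.hyps by auto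
    then show ?thesis using True by (intro exI[of _ a]) auto
  next
    case False
    then obtain k0 where k0: "k0 \<in> K" "b k0 j \<noteq> 0" by auto
    define K' where "K' = K - {k0}"
    define b' where "b' k i = b k i - (b k j / b k0 j) * b k0 i" for k i
    have fK': "finite K'" using insert.prems by (simp add: K'_def)
    have cK': "card J < card K'" using insert.prems insert.hyps k0 by (simp add: K'_def)
    obtain a' where a': "\<exists>k\<in>K'. a' k \<noteq> 0" "\<forall>i\<in>J. (\<Sum>k\<in>K'. a' k * b' k i) = 0"
      using insert.IH[OF fK' cK', of b'] by auto
    define s where "s = (\<Sum>k\<in>K'. a' k * b k j)"
    define a where "a k = (if k = k0 then - s / b k0 j else a' k)" for k
    have split: "(\<Sum>k\<in>K. a k * b k i) = a k0 * b k0 i + (\<Sum>k\<in>K'. a' k * b k i)" for i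
    proof -
      have "(\<Sum>k\<in>K. a k * b k i) = a k0 * b k0 i + (\<Sum>k\<in>K'. a k * b k i)"
        using sum.remove[OF insert.prems(1) k0(1)] by (simp add: K'_def)
      also have "(\<Sum>k\<in>K'. a k * b k i) = (\<Sum>k\<in>K'. a' k * b k i)"
        by (rule sum.cong) (auto simp: a_def K'_def)
      finally show ?thesis .
    qed
    have eqi: "(\<Sum>k\<in>K. a k * b k i) = 0" if "i \<in> insert j J" for i
    proof (cases "i = j")
      case True
      have ak0: "a k0 * b k0 j = - s" using k0(2) by (simp add: a_def)
      show ?thesis using split[of j] ak0 True by (simp add: s_def)
    next
      case False
      then have iJ: "i \<in> J" using that by auto
      have "0 = (\<Sum>k\<in>K'. a' k * b' k i)" using a'(2) iJ by simp
      also have "\<dots> = (\<Sum>k\<in>K'. a' k * b k i - (a' k * b k j) / b k0 j * b k0 i)"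
        by (rule sum.cong) (use k0(2) in \<open>auto simp: b'_def field_simps\<close>)
      also have "\<dots> = (\<Sum>k\<in>K'. a' k * b k i) - s / b k0 j * b k0 i"
        by (simp add: s_def sum_subtractf sum_distrib_right sum_divide_distrib)
      finally have "(\<Sum>k\<in>K'. a' k * b k i) = s / b k0 j * b k0 i" by simp
      moreover have "a k0 = - s / b k0 j" by (simp add: a_def)
      ultimately show ?thesis using split[of i] by simp
    qed
    have "\<exists>k\<in>K. a k \<noteq> 0" using a'(1) by (auto simp: a_def K'_def)
    then show ?thesis using eqi by blast
  qed
qed

lemma span_rows:
  assumes "k \<ge> 1"
  shows "\<exists>\<beta>. \<forall>S. S \<subseteq> {1..m} \<longrightarrow> (of_nat (r k S) :: rat) = (\<Sum>j\<in>{1..m * (m + 1) div 2}. \<beta> j * of_nat (r j S))"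
  using assms
proof (induction k rule: less_induct)
  case (less k)
  define n where "n = m * (m + 1) div 2"
  show ?case
  proof (cases "k \<le> n")
    case True
    show ?thesis
    proof (intro exI[of _ "\<lambda>j. if j = k then 1 else 0"] allI impI)
      fix S
      have "(\<Sum>j\<in>{1..n}. (if j = k then 1 else 0) * (of_nat (r j S) :: rat))
          = (\<Sum>j\<in>{1..n}. if j = k then of_nat (r j S) else 0)"
        by (rule sum.cong) auto
      also have "\<dots> = of_nat (r k S)" using True less.prems by simp
      finally show "(of_nat (r k S) :: rat) = (\<Sum>j\<in>{1..m * (m + 1) div 2}. (if j = k then 1 else 0) * of_nat (r j S))"
        by (simp add: n_def)
    qed
  next
    case False
    have "\<forall>l\<in>{k-n..k-1}. \<exists>\<beta>. \<forall>S. S \<subseteq> {1..m} \<longrightarrow> (of_nat (r l S) :: rat) = (\<Sum>j\<in>{1..n}. \<beta> j * of_nat (r j S))"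
      using False less.IH unfolding n_def by auto
    then obtain B where B: "\<forall>l\<in>{k-n..k-1}. \<forall>S. S \<subseteq> {1..m} \<longrightarrow> (of_nat (r l S) :: rat) = (\<Sum>j\<in>{1..n}. B l j * of_nat (r j S))"
      by metis
    define \<beta> where "\<beta> j = - (\<Sum>l\<in>{k-n..k-1}. of_int (c m (k - l)) * B l j)" for j
    show ?thesis
    proof (intro exI[of _ \<beta>] allI impI)
      fix S assume S: "S \<subseteq> {1..m}"
      have "int (r k S) = - (\<Sum>l = k - n .. k - 1. c m (k - l) * int (r l S))"
        using recurrence[OF S] False by (simp add: n_def)
      then have "(of_nat (r k S) :: rat) = of_int (- (\<Sum>l = k - n .. k - 1. c m (k - l) * int (r l S)))"
        by (metis of_int_of_nat_eq)
      also have "\<dots> = - (\<Sum>l = k - n .. k - 1. of_int (c m (k - l)) * of_nat (r l S))"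
        by simp
      also have "\<dots> = - (\<Sum>l = k - n .. k - 1. of_int (c m (k - l)) * (\<Sum>j\<in>{1..n}. B l j * of_nat (r j S)))"
        using B S by simp
      also have "\<dots> = - (\<Sum>l = k - n .. k - 1. \<Sum>j\<in>{1..n}. of_int (c m (k - l)) * (B l j * of_nat (r j S)))"
        by (simp add: sum_distrib_left)
      also have "\<dots> = - (\<Sum>j\<in>{1..n}. \<Sum>l = k - n .. k - 1. of_int (c m (k - l)) * (B l j * of_nat (r j S)))"
        by (subst sum.swap) (rule refl)
      also have "\<dots> = (\<Sum>j\<in>{1..n}. \<beta> j * of_nat (r j S))"
        by (simp add: \<beta>_def sum_distrib_right sum_negf mult.assoc)
      finally show "(of_nat (r k S) :: rat) = (\<Sum>j\<in>{1..m * (m + 1) div 2}. \<beta> j * of_nat (r j S))"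
        by (simp add: n_def)
    qed
  qed
qed


theorem corollaryA:
  fixes m :: nat
  assumes "m > 0"
  shows "matrix_rank {k :: nat. k > 0} {S. S \<subseteq> {1..m} \<and> S \<noteq> {}} (\<lambda>k S. of_nat (r k S))
           = m * (m + 1) div 2
       \<and> (\<forall>k > m * (m + 1) div 2. \<forall>S. S \<subseteq> {1..m} \<and> S \<noteq> {} \<longrightarrow>
            int (r k S) = - (\<Sum>j = k - m * (m + 1) div 2 .. k - 1. c m (k - j) * int (r j S)))"
proof
  define n where "n = m * (m + 1) div 2"
  define C where "C = {S. S \<subseteq> {1..m} \<and> S \<noteq> {}}"
  define M where "M = (\<lambda>k S. of_nat (r k S) :: rat)"
  have ind: "indep_rows {1..n} C M"
    unfolding indep_rows_def
  proof (intro conjI allI impI)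
    fix a :: "nat \<Rightarrow> rat"
    assume "\<forall>s\<in>C. (\<Sum>k\<in>{1..n}. a k * M k s) = 0"
    then show "\<forall>k\<in>{1..n}. a k = 0"
      using rows_indep[of m a] by (auto simp: C_def M_def n_def)
  qed simp
  have bound: "card K \<le> n" if K: "K \<subseteq> {k. k > 0}" "indep_rows K C M" for K
  proof (rule ccontr)
    assume "\<not> card K \<le> n"
    then have cK: "card {1..n} < card K" by simp
    have fK: "finite K" using K(2) unfolding indep_rows_def by blast
    have "\<forall>k\<in>K. \<exists>\<beta>. \<forall>S. S \<subseteq> {1..m} \<longrightarrow> (of_nat (r k S) :: rat) = (\<Sum>j\<in>{1..n}. \<beta> j * of_nat (r j S))"
    proof
      fix k assume "k \<in> K"
      then have "k \<ge> 1" using K(1) by auto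
      then show "\<exists>\<beta>. \<forall>S. S \<subseteq> {1..m} \<longrightarrow> (of_nat (r k S) :: rat) = (\<Sum>j\<in>{1..n}. \<beta> j * of_nat (r j S))"
        using span_rows[of k m] by (simp add: n_def)
    qed
    from bchoice[OF this] obtain B where B: "\<forall>k\<in>K. \<forall>S. S \<subseteq> {1..m} \<longrightarrow> (of_nat (r k S) :: rat) = (\<Sum>j\<in>{1..n}. B k j * of_nat (r j S))"
      by blast
    obtain a where a: "\<exists>k\<in>K. a k \<noteq> 0" "\<forall>j\<in>{1..n}. (\<Sum>k\<in>K. a k * B k j) = (0::rat)"
      using elim[OF _ fK cK, of B] by auto
    have "\<forall>s\<in>C. (\<Sum>k\<in>K. a k * M k s) = 0"
    proof
      fix S assume S: "S \<in> C"
      have "(\<Sum>k\<in>K. a k * M k S) = (\<Sum>k\<in>K. a k * (\<Sum>j\<in>{1..n}. B k j * of_nat (r j S)))"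
        by (intro sum.cong refl) (use B S in \<open>auto simp: M_def C_def\<close>)
      also have "\<dots> = (\<Sum>j\<in>{1..n}. (\<Sum>k\<in>K. a k * B k j) * of_nat (r j S))"
        by (simp add: sum_distrib_left sum_distrib_right sum.swap[of _ K] mult.assoc)
      also have "\<dots> = 0" using a(2) by simp
      finally show "(\<Sum>k\<in>K. a k * M k S) = 0" .
    qed
    then have "\<forall>k\<in>K. a k = 0" using K(2) unfolding indep_rows_def by blast
    then show False using a(1) by blast
  qed
  have "Sup (card ` {K. K \<subseteq> {k. k > 0} \<and> indep_rows K C M}) = n"
  proof (rule cSup_eq_maximum)
    show "n \<in> card ` {K. K \<subseteq> {k. k > 0} \<and> indep_rows K C M}"
      using ind by (intro image_eqI[of _ _ "{1..n}"]) auto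
  next
    fix x assume "x \<in> card ` {K. K \<subseteq> {k. k > 0} \<and> indep_rows K C M}"
    then show "x \<le> n" using bound by auto
  qed
  then show "matrix_rank {k :: nat. k > 0} {S. S \<subseteq> {1..m} \<and> S \<noteq> {}} (\<lambda>k S. of_nat (r k S)) = m * (m + 1) div 2"
    by (simp add: matrix_rank_def C_def M_def n_def)
next
  show "\<forall>k > m * (m + 1) div 2. \<forall>S. S \<subseteq> {1..m} \<and> S \<noteq> {} \<longrightarrow>
            int (r k S) = - (\<Sum>j = k - m * (m + 1) div 2 .. k - 1. c m (k - j) * int (r j S))"
    using recurrence by blast
qed

end
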